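(* Let $U_2$ be a unitary matrix with real entries having a unique (up to scalars) eigenvector $|\phi_0\rangle$ of eigenvalue $1$, chosen with real entries and norm $1$; let $|\mu\rangle$ be a unit vector with real entries, $U_1=I-2|\mu\rangle\langle\mu|$, $U=U_2U_1$, and $|\tilde\phi_0\rangle=|\phi_0\rangle-\langle\mu|\phi_0\rangle|\mu\rangle$. Let $\varepsilon\in(0,1)$. For every $T\ge\max\{1,\mathsf{QHT}_\varepsilon(U_2,|\mu\rangle)\}$, the procedure $\mathbf{Detect}(U,1/T,\varepsilon)$ accepts $|\tilde\phi_0\rangle$ with probability $\|\tilde\phi_0\|^2-O(\varepsilon)$ if $\langle\phi_0|\mu\rangle\ne0$, and accepts with probability $0$ otherwise. Moreover the number of applications of $\text{c-}U$ is $O(\log(1/\varepsilon)\cdot T)$.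
   Context: Decompose $|\tilde\phi_0\rangle$ in eigenvectors of the real unitary $U$: $|\tilde\phi_0\rangle=\delta_0|w_0\rangle+\sum_{1\le j\le J}\delta_j(|w_j^+\rangle+|w_j^-\rangle)+\delta_{-1}|w_{-1}\rangle$ with real coefficients, where $|w_0\rangle$ (resp. $|w_{-1}\rangle$) is a unit eigenvector of eigenvalue $1$ (resp. $-1$), and $|w_j^\pm\rangle$ are unit eigenvectors of eigenvalues $e^{\pm i\alpha_j}$, $0<\alpha_j<\pi$, with $|w_j^-\rangle=\overline{|w_j^+\rangle}$. $\mathit{QH}$ is the random variable equal to $1/\alpha_j$ with probability $2\delta_j^2$, to $1/\pi$ with probability $\delta_{-1}^2$, and to $0$ otherwise. The quantum $\varepsilon$-error $|\mu\rangle$-hitting time of $U_2$ is $\mathsf{QHT}_\varepsilon(U_2,|\mu\rangle)=\min\{y:\Pr[\mathit{QH}>y]\le\varepsilon\}$. "Accepts with probability $p$" on an unnormalized input means the accepting branch has squared norm $p$. $\mathbf{Estimate}$ is the standard phase estimation circuit for $U$ with precision $\Delta$ (on an eigenvector with eigenphase $\alpha\in(-\pi,\pi]$ it outputs $\alpha$ within $\Delta$ with error probability at most $1/3$, outputs $0$ with certainty on a $1$-eigenvector, and uses $O(1/\Delta)$ calls to $\text{c-}U$ and its inverse). $\mathbf{Detect}(U,\Delta,\varepsilon)$ on input $|\psi\rangle$: apply $\Theta(\log(1/\varepsilon))$ times $\mathbf{Estimate}$ with precision $\Delta$ to the same state $|\psi\rangle$; accept if at least one estimated phase is nonzero, otherwise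 reject. *)

theory Defs
  imports "Jordan_Normal_Form.Matrix" "HOL-Probability.Probability_Mass_Function"
begin

definition cvec :: "real Matrix.vec \<Rightarrow> complex Matrix.vec" where
  "cvec v = map_vec complex_of_real v"

definition cmat :: "real mat \<Rightarrow> complex mat" where
  "cmat A = map_mat complex_of_real A"

definition sqnorm :: "complex Matrix.vec \<Rightarrow> real" where
  "sqnorm v = (\<Sum>i<dim_vec v. (cmod (Matrix.vec_index v i))\<^sup>2)"

definition rsqnorm :: "real Matrix.vec \<Rightarrow> real" where
  "rsqnorm v = (\<Sum>i<dim_vec v. (Matrix.vec_index v i)\<^sup>2)"

definition eigspace :: "nat \<Rightarrow> complex mat \<Rightarrow> complex \<Rightarrow> complex Matrix.vec set" where
  "eigspace n A l = {v \<in> carrier_vec n. A *\<^sub>v v = l \<cdot>\<^sub>v v}"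

definition orth_proj :: "complex Matrix.vec set \<Rightarrow> complex Matrix.vec \<Rightarrow> complex Matrix.vec" where
  "orth_proj S x = (THE p. p \<in> S \<and> (\<forall>w\<in>S. (x - p) \<bullet>c w = 0))"

definition eigphases :: "nat \<Rightarrow> complex mat \<Rightarrow> real set" where
  "eigphases n A = {\<theta>. - pi < \<theta> \<and> \<theta> \<le> pi \<and> eigspace n A (cis \<theta>) \<noteq> {0\<^sub>v n}}"

definition spec_weight :: "nat \<Rightarrow> complex mat \<Rightarrow> complex Matrix.vec \<Rightarrow> real \<Rightarrow> real" where
  "spec_weight n A \<psi> \<theta> = sqnorm (orth_proj (eigspace n A (cis \<theta>)) \<psi>)"

definition U1 :: "nat \<Rightarrow> real Matrix.vec \<Rightarrow> real mat" where
  "U1 n \<mu> = 1\<^sub>m n - Matrix.mat n n (\<lambda>(i,j). 2 * (Matrix.vec_index \<mu> i) * (Matrix.vec_index \<mu> j))"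

definition phitilde :: "real Matrix.vec \<Rightarrow> real Matrix.vec \<Rightarrow> real Matrix.vec" where
  "phitilde \<phi>0 \<mu> = \<phi>0 - (scalar_prod \<mu> \<phi>0) \<cdot>\<^sub>v \<mu>"

text \<open>Pr[QH > y]: QH = 1/|theta| with probability equal to the squared norm of the
  component of phitilde on the eigenspace(s) of e^{+-i theta} (theta in (0,pi]),
  and QH = 0 otherwise.  Summing over both signs of theta gives 2 delta_j^2.\<close>
definition QH_tail :: "nat \<Rightarrow> complex mat \<Rightarrow> complex Matrix.vec \<Rightarrow> real \<Rightarrow> real" where
  "QH_tail n A \<psi> y = (\<Sum>\<theta>\<in>{\<theta> \<in> eigphases n A. \<theta> \<noteq> 0 \<and> 1 / \<bar>\<theta>\<bar> > y}. spec_weight n A \<psi> \<theta>)"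

definition QHT :: "nat \<Rightarrow> real mat \<Rightarrow> real Matrix.vec \<Rightarrow> real Matrix.vec \<Rightarrow> real \<Rightarrow> real" where
  "QHT n U2 \<mu> \<phi>0 \<epsilon> =
     Inf {y. 0 \<le> y \<and> QH_tail n (cmat (U2 * U1 n \<mu>)) (cvec (phitilde \<phi>0 \<mu>)) y \<le> \<epsilon>}"

definition circ_dist :: "real \<Rightarrow> real \<Rightarrow> real" where
  "circ_dist x y = min \<bar>x - y\<bar> (2 * pi - \<bar>x - y\<bar>)"

text \<open>Abstract specification of Estimate: est D theta is the output distribution
  (an estimate of the phase, in (-pi,pi]) on an eigenvector of eigenphase theta,
  with precision D; cnt D is the number of calls to c-U and its inverse.\<close>
definition is_phase_estimator :: "(real \<Rightarrow> real \<Rightarrow> real pmf) \<Rightarrow> (real \<Rightarrow> nat) \<Rightarrow> real \<Rightarrow> bool" where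
  "is_phase_estimator est cnt K \<longleftrightarrow>
     (\<forall>D>0. est D 0 = return_pmf 0 \<and> real (cnt D) \<le> K / D \<and>
        (\<forall>\<theta>. - pi < \<theta> \<and> \<theta> \<le> pi \<longrightarrow>
           set_pmf (est D \<theta>) \<subseteq> {-pi<..pi} \<and>
           measure_pmf.prob (est D \<theta>) {x. circ_dist x \<theta> < D} \<ge> 2/3))"

text \<open>Acceptance probability (squared norm of the accepting branch) of Detect with
  m repetitions of Estimate at precision D on the (possibly unnormalized) input psi:
  on the eigenspace of phase theta all m runs output 0 with probability
  (Pr[output = 0])^m, and eigenspace components do not interfere.\<close>
definition detect_accept :: "(real \<Rightarrow> real \<Rightarrow> real pmf) \<Rightarrow> nat \<Rightarrow> real \<Rightarrow> nat \<Rightarrow> complex mat \<Rightarrow> complex Matrix.vec \<Rightarrow> real" where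
  "detect_accept est m D n A \<psi> =
     (\<Sum>\<theta>\<in>eigphases n A. spec_weight n A \<psi> \<theta> * (1 - (pmf (est D \<theta>) 0) ^ m))"

definition detect_calls :: "(real \<Rightarrow> nat) \<Rightarrow> nat \<Rightarrow> real \<Rightarrow> nat" where
  "detect_calls cnt m D = m * cnt D"

end

theory Submission
  imports Defs "Jordan_Normal_Form.Jordan_Normal_Form_Existence"
begin


lemma jordan_matrix_struct:
  fixes n_as :: "(nat \<times> 'a::{zero,one}) list"
  assumes "i < sum_list (map fst n_as)" "j < sum_list (map fst n_as)"
    "jordan_matrix n_as $$ (i,j) \<noteq> 0"
  shows "j = i \<or> (j = Suc i \<and> jordan_matrix n_as $$ (i,i) = jordan_matrix n_as $$ (j,j))"
  using assms
proof (induct n_as arbitrary: i j)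
  case Nil
  then show ?case by simp
next
  case (Cons na n_as)
  obtain k a where na: "na = (k,a)" by force
  let ?N = "sum_list (map fst n_as)"
  have e: "\<And>i j. i < k + ?N \<Longrightarrow> j < k + ?N \<Longrightarrow> jordan_matrix ((k,a) # n_as) $$ (i,j) =
    (if i < k then if j < k then jordan_block k a $$ (i,j) else 0
     else if j < k then 0 else jordan_matrix n_as $$ (i - k, j - k))"
    unfolding jordan_matrix_Cons by (subst index_mat_four_block, auto)
  from Cons.prems have i: "i < k + ?N" and j: "j < k + ?N" by (auto simp: na)
  show ?case
  proof (cases "i < k")
    case True
    then show ?thesis using Cons.prems e[OF i j] e[OF i i] e[OF j j] i j
      by (auto simp: na split: if_splits)
  next
    case False
    then have jk: "\<not> j < k" using Cons.prems e[OF i j] by (auto simp: na split: if_splits)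
    have "j - k = i - k \<or> (j - k = Suc (i - k) \<and> jordan_matrix n_as $$ (i-k,i-k) = jordan_matrix n_as $$ (j-k,j-k))"
      using Cons.hyps[of "i-k" "j-k"] Cons.prems e[OF i j] False jk i j by (auto simp: na)
    then show ?thesis using False jk e[OF i j] e[OF i i] e[OF j j] by (auto simp: na)
  qed
qed


lemma cprod_smult:
  fixes x y :: "complex Matrix.vec"
  assumes "x \<in> carrier_vec n" "y \<in> carrier_vec n"
  shows "(a \<cdot>\<^sub>v x) \<bullet>c (b \<cdot>\<^sub>v y) = a * cnj b * (x \<bullet>c y)"
  using assms by (simp add: scalar_prod_def conjugate_vec_def sum_distrib_left algebra_simps)

lemma cprod_add_left:
  fixes x y z :: "complex Matrix.vec"
  assumes "x \<in> carrier_vec n" "y \<in> carrier_vec n" "z \<in> carrier_vec n"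
  shows "(x + y) \<bullet>c z = x \<bullet>c z + y \<bullet>c z"
  using assms by (simp add: scalar_prod_def conjugate_vec_def sum.distrib algebra_simps)

lemma cprod_self_zero:
  fixes x :: "complex Matrix.vec"
  assumes "x \<in> carrier_vec n" "x \<bullet>c x = 0" shows "x = 0\<^sub>v n"
  using assms conjugate_square_eq_0_vec by blast

definition iso :: "nat \<Rightarrow> complex mat \<Rightarrow> bool" where
  "iso n A \<longleftrightarrow> A \<in> carrier_mat n n \<and> (\<forall>x\<in>carrier_vec n. \<forall>y\<in>carrier_vec n. (A *\<^sub>v x) \<bullet>c (A *\<^sub>v y) = x \<bullet>c y)"

lemma iso_eig_unit:
  assumes "iso n A" "x \<in> carrier_vec n" "x \<noteq> 0\<^sub>v n" "A *\<^sub>v x = a \<cdot>\<^sub>v x"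
  shows "a * cnj a = 1"
proof -
  have "x \<bullet>c x = (A *\<^sub>v x) \<bullet>c (A *\<^sub>v x)" using assms(1,2) unfolding iso_def by auto
  also have "\<dots> = (a \<cdot>\<^sub>v x) \<bullet>c (a \<cdot>\<^sub>v x)" unfolding assms(4) ..
  also have "\<dots> = a * cnj a * (x \<bullet>c x)" using assms(2) cprod_smult by metis
  finally have "(a * cnj a - 1) * (x \<bullet>c x) = 0" by (simp add: algebra_simps)
  moreover have "x \<bullet>c x \<noteq> 0" using assms(2,3) cprod_self_zero by blast
  ultimately show ?thesis by simp
qed

lemma iso_eig_orth:
  assumes "iso n A" "x \<in> carrier_vec n" "y \<in> carrier_vec n"
    "A *\<^sub>v x = a \<cdot>\<^sub>v x" "A *\<^sub>v y = b \<cdot>\<^sub>v y" "a \<noteq> b"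
  shows "x \<bullet>c y = 0"
proof (cases "y = 0\<^sub>v n")
  case True then show ?thesis using assms by simp
next
  case False
  have b: "b * cnj b = 1" using iso_eig_unit[OF assms(1,3) False assms(5)] .
  have "x \<bullet>c y = (A *\<^sub>v x) \<bullet>c (A *\<^sub>v y)" using assms(1,2,3) unfolding iso_def by auto
  also have "\<dots> = (a \<cdot>\<^sub>v x) \<bullet>c (b \<cdot>\<^sub>v y)" unfolding assms(4,5) ..
  also have "\<dots> = a * cnj b * (x \<bullet>c y)" using assms(2,3) cprod_smult by metis
  finally have "(a * cnj b - b * cnj b) * (x \<bullet>c y) = 0" using b by (simp add: algebra_simps)
  moreover have "a * cnj b \<noteq> b * cnj b" using assms(6) b
    by (metis mult_cancel_right mult_zero_left zero_neq_one)
  ultimately show ?thesis by simp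
qed

lemma iso_chain:
  assumes "iso n A" "p \<in> carrier_vec n" "q \<in> carrier_vec n" "p \<noteq> 0\<^sub>v n"
    "A *\<^sub>v p = a \<cdot>\<^sub>v p" "A *\<^sub>v q = s \<cdot>\<^sub>v p + a \<cdot>\<^sub>v q"
  shows "s = 0"
proof -
  have a: "a * cnj a = 1" using iso_eig_unit[OF assms(1,2,4,5)] .
  have "q \<bullet>c p = (A *\<^sub>v q) \<bullet>c (A *\<^sub>v p)" using assms(1,2,3) unfolding iso_def by auto
  also have "\<dots> = (s \<cdot>\<^sub>v p + a \<cdot>\<^sub>v q) \<bullet>c (a \<cdot>\<^sub>v p)" unfolding assms(5,6) ..
  also have "\<dots> = (s \<cdot>\<^sub>v p) \<bullet>c (a \<cdot>\<^sub>v p) + (a \<cdot>\<^sub>v q) \<bullet>c (a \<cdot>\<^sub>v p)"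
    by (rule cprod_add_left[of _ n], insert assms, auto)
  also have "\<dots> = s * cnj a * (p \<bullet>c p) + a * cnj a * (q \<bullet>c p)"
    using assms(2,3) cprod_smult by metis
  finally have "s * cnj a * (p \<bullet>c p) = 0" using a by simp
  moreover have "p \<bullet>c p \<noteq> 0" using assms(2,4) cprod_self_zero by blast
  moreover have "cnj a \<noteq> 0" using a by auto
  ultimately show ?thesis by simp
qed



lemma sum_two_point:
  fixes f :: "nat \<Rightarrow> complex"
  assumes "j < n" "\<And>k. k < n \<Longrightarrow> k \<noteq> j \<Longrightarrow> (j = 0 \<or> k \<noteq> j - 1) \<Longrightarrow> f k = 0"
  shows "(\<Sum>k<n. f k) = f j + (if j = 0 then 0 else f (j - 1))"
proof -
  let ?S = "if j = 0 then {j} else {j, j - 1}"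
  have sub: "?S \<subseteq> {..<n}" using assms(1) by auto
  have "(\<Sum>k\<in>?S. f k) = (\<Sum>k<n. f k)"
    by (rule sum.mono_neutral_left) (use sub assms(2) in \<open>auto split: if_splits\<close>)
  then have "(\<Sum>k<n. f k) = (\<Sum>k\<in>?S. f k)" ..
  also have "\<dots> = f j + (if j = 0 then 0 else f (j - 1))" by (cases j, auto)
  finally show ?thesis .
qed

lemma unitary_diag:
  assumes iso: "iso n A"
  obtains P Q :: "complex mat" and d :: "nat \<Rightarrow> complex" where
    "P \<in> carrier_mat n n" "Q \<in> carrier_mat n n" "P * Q = 1\<^sub>m n" "Q * P = 1\<^sub>m n"
    "\<And>j. j < n \<Longrightarrow> A *\<^sub>v col P j = d j \<cdot>\<^sub>v col P j"
    "\<And>j. j < n \<Longrightarrow> col P j \<noteq> 0\<^sub>v n"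
proof -
  have A: "A \<in> carrier_mat n n" using iso unfolding iso_def by auto
  obtain as where "char_poly A = (\<Prod>a\<leftarrow>as. [:- a, 1:])" using char_poly_factorized[OF A] by blast
  from jordan_nf_exists[OF A this] obtain n_as where "jordan_nf A n_as" by blast
  then obtain P Q where wit: "similar_mat_wit A (jordan_matrix n_as) P Q"
    unfolding jordan_nf_def similar_mat_def by blast
  define J where "J = jordan_matrix n_as"
  have dA: "dim_row A = n" using A by auto
  from wit have P: "P \<in> carrier_mat n n" and Q: "Q \<in> carrier_mat n n" and J: "J \<in> carrier_mat n n"
    and PQ: "P * Q = 1\<^sub>m n" and QP: "Q * P = 1\<^sub>m n" and AJ: "A = P * J * Q"
    unfolding similar_mat_wit_def J_def dA Let_def by auto
  have N: "sum_list (map fst n_as) = n" using J unfolding J_def by (metis carrier_matD(1) jordan_matrix_dim(1))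
  have struct: "\<And>i j. i < n \<Longrightarrow> j < n \<Longrightarrow> J $$ (i,j) \<noteq> 0 \<Longrightarrow>
      j = i \<or> (j = Suc i \<and> J $$ (i,i) = J $$ (j,j))"
    using jordan_matrix_struct N unfolding J_def by metis
  have AP: "A * P = P * J"
  proof -
    have "A * P = P * J * Q * P" using AJ by simp
    also have "\<dots> = P * J * (Q * P)" using P J Q by (metis assoc_mult_mat mult_carrier_mat)
    also have "\<dots> = P * J" using P J QP by simp
    finally show ?thesis .
  qed
  define d where "d j = J $$ (j,j)" for j
  have colAP: "A *\<^sub>v col P j = P *\<^sub>v col J j" if "j < n" for j
  proof -
    have "A *\<^sub>v col P j = col (A * P) j" using col_mult2[OF A P that] by simp
    also have "\<dots> = col (P * J) j" using AP by simp
    also have "\<dots> = P *\<^sub>v col J j" using col_mult2[OF P J that] by simp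
    finally show ?thesis .
  qed
  have PJ: "P *\<^sub>v col J j = d j \<cdot>\<^sub>v col P j + (if j = 0 then 0\<^sub>v n else J $$ (j-1, j) \<cdot>\<^sub>v col P (j-1))"
    if j: "j < n" for j
  proof (rule eq_vecI)
    show "dim_vec (P *\<^sub>v col J j) = dim_vec (d j \<cdot>\<^sub>v col P j + (if j = 0 then 0\<^sub>v n else J $$ (j-1, j) \<cdot>\<^sub>v col P (j-1)))"
      using P by auto
    fix i assume "i < dim_vec (d j \<cdot>\<^sub>v col P j + (if j = 0 then 0\<^sub>v n else J $$ (j-1, j) \<cdot>\<^sub>v col P (j-1)))"
    then have i: "i < n" using P by (auto split: if_splits)
    have "(P *\<^sub>v col J j) $ i = (\<Sum>k<n. P $$ (i,k) * J $$ (k,j))"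
      using P J i j by (simp add: scalar_prod_def lessThan_atLeast0)
    also have "\<dots> = P $$ (i,j) * J $$ (j,j) + (if j = 0 then 0 else P $$ (i,j-1) * J $$ (j-1,j))"
      by (rule sum_two_point[OF j], insert struct j, force)
    also have "\<dots> = (d j \<cdot>\<^sub>v col P j + (if j = 0 then 0\<^sub>v n else J $$ (j-1, j) \<cdot>\<^sub>v col P (j-1))) $ i"
      using P i j by (auto simp: d_def)
    finally show "(P *\<^sub>v col J j) $ i = (d j \<cdot>\<^sub>v col P j + (if j = 0 then 0\<^sub>v n else J $$ (j-1, j) \<cdot>\<^sub>v col P (j-1))) $ i" .
  qed
  have nz: "col P j \<noteq> 0\<^sub>v n" if j: "j < n" for j
  proof
    assume "col P j = 0\<^sub>v n"
    then have "(Q * P) $$ (j,j) = 0" using Q P j by (simp add: index_mult_mat)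
    then show False using QP j by simp
  qed
  have supz: "j = 0 \<or> J $$ (j-1, j) = 0" if "j < n" for j
    using that
  proof (induct j)
    case 0 then show ?case by simp
  next
    case (Suc j)
    show ?case
    proof (rule ccontr)
      assume "\<not> (Suc j = 0 \<or> J $$ (Suc j - 1, Suc j) = 0)"
      then have s: "J $$ (j, Suc j) \<noteq> 0" by simp
      then have dd: "d j = d (Suc j)" using struct[of j "Suc j"] Suc.prems unfolding d_def by auto
      have ej: "A *\<^sub>v col P j = d j \<cdot>\<^sub>v col P j"
        using Suc colAP[of j] PJ[of j] P by auto
      have ej1: "A *\<^sub>v col P (Suc j) = J $$ (j, Suc j) \<cdot>\<^sub>v col P j + d j \<cdot>\<^sub>v col P (Suc j)"
        using Suc.prems colAP[of "Suc j"] PJ[of "Suc j"] P dd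
        by (simp, subst comm_add_vec[of _ n], insert P Suc.prems, auto)
      have "J $$ (j, Suc j) = 0"
        by (rule iso_chain[OF iso _ _ nz ej ej1], insert P Suc.prems, auto)
      then show False using s by simp
    qed
  qed
  have eig: "A *\<^sub>v col P j = d j \<cdot>\<^sub>v col P j" if "j < n" for j
    using colAP[OF that] PJ[OF that] supz[OF that] P that by auto
  show ?thesis by (rule that[OF P Q PQ QP eig nz])
qed



lemma cprod_minus_left:
  fixes x y z :: "complex Matrix.vec"
  assumes "x \<in> carrier_vec n" "y \<in> carrier_vec n" "z \<in> carrier_vec n"
  shows "(x - y) \<bullet>c z = x \<bullet>c z - y \<bullet>c z"
  using assms by (simp add: scalar_prod_def conjugate_vec_def sum_subtractf algebra_simps)

lemma orth_proj_eq:
  assumes S: "S \<subseteq> carrier_vec n" "\<And>a b. a \<in> S \<Longrightarrow> b \<in> S \<Longrightarrow> a - b \<in> S"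
    and p: "p \<in> S" and x: "x \<in> carrier_vec n" and orth: "\<And>w. w \<in> S \<Longrightarrow> (x - p) \<bullet>c w = 0"
  shows "orth_proj S x = p"
  unfolding orth_proj_def
proof (rule the_equality)
  show "p \<in> S \<and> (\<forall>w\<in>S. (x - p) \<bullet>c w = 0)" using p orth by auto
  fix q assume q: "q \<in> S \<and> (\<forall>w\<in>S. (x - q) \<bullet>c w = 0)"
  have pc: "p \<in> carrier_vec n" and qc: "q \<in> carrier_vec n" using p q S by auto
  have pq: "p - q \<in> S" using S p q by auto
  have e: "p - q = (x - q) - (x - p)" by (intro eq_vecI) (use pc qc x in auto)
  have "(p - q) \<bullet>c (p - q) = ((x - q) - (x - p)) \<bullet>c (p - q)"
    by (rule arg_cong[where f="\<lambda>z. z \<bullet>c (p - q)"], rule e)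
  also have "\<dots> = (x - q) \<bullet>c (p - q) - (x - p) \<bullet>c (p - q)"
    by (rule cprod_minus_left[of _ n]) (use pc qc x in auto)
  also have "\<dots> = 0" using q orth[OF pq] pq by auto
  finally have "p - q = 0\<^sub>v n" using cprod_self_zero[of "p - q" n] pc qc by auto
  then have z: "p - q = 0\<^sub>v n" .
  show "q = p"
  proof (rule eq_vecI)
    fix i assume "i < dim_vec p"
    then have i: "i < n" using pc by auto
    have "(p - q) $ i = 0" using z i by simp
    then show "q $ i = p $ i" using pc qc i by simp
  qed (use pc qc in auto)
qed

lemma eigspace_sub:
  assumes A: "A \<in> carrier_mat n n"
  shows "eigspace n A l \<subseteq> carrier_vec n"
    "\<And>a b. a \<in> eigspace n A l \<Longrightarrow> b \<in> eigspace n A l \<Longrightarrow> a - b \<in> eigspace n A l"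
proof -
  show "eigspace n A l \<subseteq> carrier_vec n" unfolding eigspace_def by auto
  fix a b assume "a \<in> eigspace n A l" "b \<in> eigspace n A l"
  then have a: "a \<in> carrier_vec n" "A *\<^sub>v a = l \<cdot>\<^sub>v a" and b: "b \<in> carrier_vec n" "A *\<^sub>v b = l \<cdot>\<^sub>v b"
    unfolding eigspace_def by auto
  have "A *\<^sub>v (a - b) = A *\<^sub>v a - A *\<^sub>v b" using mult_minus_distrib_mat_vec[OF A a(1) b(1)] .
  also have "\<dots> = l \<cdot>\<^sub>v (a - b)" unfolding a b using a b by (intro eq_vecI, auto simp: algebra_simps)
  finally show "a - b \<in> eigspace n A l" unfolding eigspace_def using a b by auto
qed

lemma sqnorm_cprod:
  assumes "v \<in> carrier_vec n"
  shows "complex_of_real (sqnorm v) = v \<bullet>c v"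
proof -
  have "complex_of_real (sqnorm v) = (\<Sum>i<n. complex_of_real ((cmod (v $ i))\<^sup>2))"
    using assms unfolding sqnorm_def by simp
  also have "\<dots> = (\<Sum>i<n. v $ i * cnj (v $ i))" by (simp only: complex_norm_square)
  also have "\<dots> = v \<bullet>c v" using assms unfolding scalar_prod_def by (simp add: lessThan_atLeast0)
  finally show ?thesis .
qed



lemma cprod_sym:
  fixes x y :: "complex Matrix.vec"
  assumes "x \<in> carrier_vec n" "y \<in> carrier_vec n"
  shows "x \<bullet>c y = cnj (y \<bullet>c x)"
  using assms unfolding scalar_prod_def
  by (simp add: cnj_sum mult.commute)

context
  fixes n :: nat and A P Q :: "complex mat" and d :: "nat \<Rightarrow> complex"
  assumes iso: "iso n A" and P: "P \<in> carrier_mat n n" and Q: "Q \<in> carrier_mat n n"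
    and PQ: "P * Q = 1\<^sub>m n"
    and eig: "\<And>j. j < n \<Longrightarrow> A *\<^sub>v col P j = d j \<cdot>\<^sub>v col P j"
    and nz: "\<And>j. j < n \<Longrightarrow> col P j \<noteq> 0\<^sub>v n"
begin

definition lc :: "(nat \<Rightarrow> complex) \<Rightarrow> nat set \<Rightarrow> complex Matrix.vec" where
  "lc c S = Matrix.vec n (\<lambda>i. \<Sum>j\<in>S. c j * P $$ (i,j))"

lemma Acar: "A \<in> carrier_mat n n" using iso unfolding iso_def by auto

lemma lc_carrier[simp]: "lc c S \<in> carrier_vec n" by (simp add: lc_def)

lemma lc_dim[simp]: "dim_vec (lc c S) = n" by (simp add: lc_def)

lemma lc_index: "i < n \<Longrightarrow> lc c S $ i = (\<Sum>j\<in>S. c j * P $$ (i,j))" by (simp add: lc_def)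

lemma lc_cprod:
  assumes S: "S \<subseteq> {..<n}" and w: "w \<in> carrier_vec n"
  shows "lc c S \<bullet>c w = (\<Sum>j\<in>S. c j * (col P j \<bullet>c w))"
proof -
  have "lc c S \<bullet>c w = (\<Sum>i<n. (\<Sum>j\<in>S. c j * P $$ (i,j)) * cnj (w $ i))"
    using w unfolding scalar_prod_def by (auto simp: lessThan_atLeast0 lc_def intro!: sum.cong)
  also have "\<dots> = (\<Sum>i<n. \<Sum>j\<in>S. c j * (P $$ (i,j) * cnj (w $ i)))"
    by (simp add: sum_distrib_right mult.assoc)
  also have "\<dots> = (\<Sum>j\<in>S. \<Sum>i<n. c j * (P $$ (i,j) * cnj (w $ i)))" by (rule sum.swap)
  also have "\<dots> = (\<Sum>j\<in>S. c j * (col P j \<bullet>c w))"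
  proof (rule sum.cong[OF refl])
    fix j assume "j \<in> S" then have j: "j < n" using S by auto
    show "(\<Sum>i<n. c j * (P $$ (i,j) * cnj (w $ i))) = c j * (col P j \<bullet>c w)"
      using w P j unfolding scalar_prod_def
      by (auto simp: lessThan_atLeast0 sum_distrib_left intro!: sum.cong)
  qed
  finally show ?thesis .
qed

lemma colP_car: "j < n \<Longrightarrow> col P j \<in> carrier_vec n" using P by auto

lemma lc_cprod2:
  assumes S: "S \<subseteq> {..<n}" and T: "T \<subseteq> {..<n}"
  shows "lc c S \<bullet>c lc e T = (\<Sum>j\<in>S. \<Sum>k\<in>T. c j * cnj (e k) * (col P j \<bullet>c col P k))"
proof -
  have "lc c S \<bullet>c lc e T = (\<Sum>j\<in>S. c j * (col P j \<bullet>c lc e T))" by (rule lc_cprod[OF S], simp)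
  also have "\<dots> = (\<Sum>j\<in>S. \<Sum>k\<in>T. c j * cnj (e k) * (col P j \<bullet>c col P k))"
  proof (rule sum.cong[OF refl])
    fix j assume "j \<in> S" then have j: "j < n" using S by auto
    have "col P j \<bullet>c lc e T = cnj (lc e T \<bullet>c col P j)" by (rule cprod_sym[of _ n], insert colP_car[OF j], auto)
    also have "\<dots> = cnj (\<Sum>k\<in>T. e k * (col P k \<bullet>c col P j))" using lc_cprod[OF T colP_car[OF j]] by simp
    also have "\<dots> = (\<Sum>k\<in>T. cnj (e k) * (col P j \<bullet>c col P k))"
      unfolding cnj_sum
    proof (rule sum.cong[OF refl])
      fix k assume "k \<in> T" then have k: "k < n" using T by auto
      show "cnj (e k * (col P k \<bullet>c col P j)) = cnj (e k) * (col P j \<bullet>c col P k)"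
        using cprod_sym[OF colP_car[OF j] colP_car[OF k]] by simp
    qed
    finally show "c j * (col P j \<bullet>c lc e T) = (\<Sum>k\<in>T. c j * cnj (e k) * (col P j \<bullet>c col P k))"
      by (simp add: sum_distrib_left mult.assoc)
  qed
  finally show ?thesis .
qed

lemma Acol: "j < n \<Longrightarrow> i < n \<Longrightarrow> (\<Sum>k<n. A $$ (i,k) * P $$ (k,j)) = d j * P $$ (i,j)"
proof -
  assume j: "j < n" and i: "i < n"
  have "(\<Sum>k<n. A $$ (i,k) * P $$ (k,j)) = Matrix.row A i \<bullet> col P j"
    unfolding scalar_prod_def using Acar P i j by (auto simp: lessThan_atLeast0 intro!: sum.cong)
  also have "\<dots> = (A *\<^sub>v col P j) $ i" using Acar P i by simp
  also have "\<dots> = (d j \<cdot>\<^sub>v col P j) $ i" using eig[OF j] by simp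
  also have "\<dots> = d j * P $$ (i,j)" using P i j by simp
  finally show ?thesis .
qed

lemma lc_eig:
  assumes S: "S \<subseteq> {j. j < n \<and> d j = l}"
  shows "A *\<^sub>v lc c S = l \<cdot>\<^sub>v lc c S"
proof (rule eq_vecI)
  show "dim_vec (A *\<^sub>v lc c S) = dim_vec (l \<cdot>\<^sub>v lc c S)" using Acar by simp
  fix i assume "i < dim_vec (l \<cdot>\<^sub>v lc c S)"
  then have i: "i < n" by simp
  have "(A *\<^sub>v lc c S) $ i = Matrix.row A i \<bullet> lc c S" using Acar i by simp
  also have "\<dots> = (\<Sum>k<n. A $$ (i,k) * lc c S $ k)" unfolding scalar_prod_def
    using Acar i by (auto simp: lessThan_atLeast0 intro!: sum.cong)
  also have "\<dots> = (\<Sum>k<n. A $$ (i,k) * (\<Sum>j\<in>S. c j * P $$ (k,j)))"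
    by (rule sum.cong[OF refl], simp add: lc_index)
  also have "\<dots> = (\<Sum>k<n. \<Sum>j\<in>S. c j * (A $$ (i,k) * P $$ (k,j)))"
    by (simp add: sum_distrib_left mult.assoc mult.left_commute)
  also have "\<dots> = (\<Sum>j\<in>S. \<Sum>k<n. c j * (A $$ (i,k) * P $$ (k,j)))" by (rule sum.swap)
  also have "\<dots> = (\<Sum>j\<in>S. c j * (d j * P $$ (i,j)))"
  proof (rule sum.cong[OF refl])
    fix j assume "j \<in> S" then have j: "j < n" using S by auto
    show "(\<Sum>k<n. c j * (A $$ (i,k) * P $$ (k,j))) = c j * (d j * P $$ (i,j))"
      using Acol[OF j i] by (simp add: sum_distrib_left[symmetric])
  qed
  also have "\<dots> = (\<Sum>j\<in>S. l * (c j * P $$ (i,j)))"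
    by (rule sum.cong[OF refl], insert S, auto)
  also have "\<dots> = (l \<cdot>\<^sub>v lc c S) $ i" using i by (simp add: lc_def sum_distrib_left)
  finally show "(A *\<^sub>v lc c S) $ i = (l \<cdot>\<^sub>v lc c S) $ i" .
qed

lemma lc_full:
  assumes v: "v \<in> carrier_vec n"
  shows "lc (\<lambda>j. (Q *\<^sub>v v) $ j) {..<n} = v"
proof -
  have "v = (P * Q) *\<^sub>v v" using PQ v by simp
  also have "\<dots> = P *\<^sub>v (Q *\<^sub>v v)" using P Q v by simp
  also have "\<dots> = lc (\<lambda>j. (Q *\<^sub>v v) $ j) {..<n}"
    using P Q v
    by (intro eq_vecI) (auto simp: lc_def scalar_prod_def lessThan_atLeast0 mult.commute intro!: sum.cong)
  finally show ?thesis by simp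
qed

lemma lc_split:
  assumes S: "S \<subseteq> {..<n}"
  shows "lc c {..<n} - lc c S = lc c ({..<n} - S)"
proof (rule eq_vecI)
  fix i assume "i < dim_vec (lc c ({..<n} - S))"
  then have i: "i < n" by simp
  have "(\<Sum>j<n. c j * P $$ (i,j)) = (\<Sum>j\<in>{..<n} - S. c j * P $$ (i,j)) + (\<Sum>j\<in>S. c j * P $$ (i,j))"
    by (rule sum.subset_diff[OF S], simp)
  then show "(lc c {..<n} - lc c S) $ i = lc c ({..<n} - S) $ i" using i by (simp add: lc_def)
qed simp

lemma spec_proj:
  assumes v: "v \<in> carrier_vec n"
  shows "orth_proj (eigspace n A l) v = lc (\<lambda>j. (Q *\<^sub>v v) $ j) {j. j < n \<and> d j = l}"
proof -
  let ?c = "\<lambda>j. (Q *\<^sub>v v) $ j"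
  let ?S = "{j. j < n \<and> d j = l}"
  have Ssub: "?S \<subseteq> {..<n}" by auto
  show ?thesis
  proof (rule orth_proj_eq[OF eigspace_sub[OF Acar]])
    show "lc ?c ?S \<in> eigspace n A l" unfolding eigspace_def using lc_eig[of ?S] by auto
    show "v \<in> carrier_vec n" by fact
    fix w assume w: "w \<in> eigspace n A l"
    then have wc: "w \<in> carrier_vec n" and Aw: "A *\<^sub>v w = l \<cdot>\<^sub>v w" unfolding eigspace_def by auto
    have "v - lc ?c ?S = lc ?c {..<n} - lc ?c ?S" using lc_full[OF v] by simp
    also have "\<dots> = lc ?c ({..<n} - ?S)" using lc_split[OF Ssub] .
    finally have vS: "v - lc ?c ?S = lc ?c ({..<n} - ?S)" .
    have "(v - lc ?c ?S) \<bullet>c w = (\<Sum>j\<in>{..<n} - ?S. ?c j * (col P j \<bullet>c w))"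
      unfolding vS by (rule lc_cprod[OF _ wc], auto)
    also have "\<dots> = 0"
    proof (rule sum.neutral, intro ballI)
      fix j assume "j \<in> {..<n} - ?S"
      then have j: "j < n" and dj: "d j \<noteq> l" by auto
      show "?c j * (col P j \<bullet>c w) = 0"
        using iso_eig_orth[OF iso colP_car[OF j] wc eig[OF j] Aw dj] by simp
    qed
    finally show "(v - lc ?c ?S) \<bullet>c w = 0" .
  qed
qed

lemma d_unit: "j < n \<Longrightarrow> cmod (d j) = 1"
proof -
  assume j: "j < n"
  have "d j * cnj (d j) = 1" by (rule iso_eig_unit[OF iso colP_car[OF j] nz[OF j] eig[OF j]])
  then have "complex_of_real ((cmod (d j))\<^sup>2) = 1" by (metis complex_norm_square)
  then have "(cmod (d j))\<^sup>2 = 1" by (metis of_real_eq_1_iff)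
  then show ?thesis by (smt (verit) norm_ge_zero power2_eq_1_iff)
qed

lemma d_cis: "j < n \<Longrightarrow> cis (Arg (d j)) = d j"
proof -
  assume j: "j < n"
  have "d j \<noteq> 0" using d_unit[OF j] by auto
  then show ?thesis using cis_Arg d_unit[OF j] by (simp add: sgn_eq)
qed

lemma Arg_in: "j < n \<Longrightarrow> Arg (d j) \<in> eigphases n A"
proof -
  assume j: "j < n"
  have "col P j \<in> eigspace n A (cis (Arg (d j)))"
    unfolding eigspace_def d_cis[OF j] using eig[OF j] colP_car[OF j] by auto
  then have "eigspace n A (cis (Arg (d j))) \<noteq> {0\<^sub>v n}" using nz[OF j] by auto
  then show ?thesis unfolding eigphases_def using Arg_bounded[of "d j"] by auto
qed

lemma cis_eq_iff: "j < n \<Longrightarrow> \<theta> \<in> eigphases n A \<Longrightarrow> (d j = cis \<theta> \<longleftrightarrow> Arg (d j) = \<theta>)"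
proof -
  assume j: "j < n" and th: "\<theta> \<in> eigphases n A"
  then have b: "- pi < \<theta>" "\<theta> \<le> pi" unfolding eigphases_def by auto
  show ?thesis
  proof
    assume "d j = cis \<theta>"
    then have "sgn (d j) = cis \<theta>" using d_unit[OF j] by (simp add: sgn_eq)
    then show "Arg (d j) = \<theta>" using cis_Arg_unique b by blast
  next
    assume "Arg (d j) = \<theta>" then show "d j = cis \<theta>" using d_cis[OF j] by simp
  qed
qed

lemma eigphases_sub: "eigphases n A \<subseteq> (\<lambda>j. Arg (d j)) ` {..<n}"
proof
  fix \<theta> assume th: "\<theta> \<in> eigphases n A"
  have ne: "eigspace n A (cis \<theta>) \<noteq> {0\<^sub>v n}" using th unfolding eigphases_def by auto
  have z: "0\<^sub>v n \<in> eigspace n A (cis \<theta>)" unfolding eigspace_def using Acar by auto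
  obtain v where v: "v \<in> eigspace n A (cis \<theta>)" "v \<noteq> 0\<^sub>v n" using ne z by blast
  then have vc: "v \<in> carrier_vec n" and Av: "A *\<^sub>v v = cis \<theta> \<cdot>\<^sub>v v" unfolding eigspace_def by auto
  show "\<theta> \<in> (\<lambda>j. Arg (d j)) ` {..<n}"
  proof (rule ccontr)
    assume nin: "\<theta> \<notin> (\<lambda>j. Arg (d j)) ` {..<n}"
    have "v \<bullet>c v = (\<Sum>j<n. (Q *\<^sub>v v) $ j * (col P j \<bullet>c v))"
      using lc_cprod[of "{..<n}" v "\<lambda>j. (Q *\<^sub>v v) $ j"] lc_full[OF vc] vc by simp
    also have "\<dots> = 0"
    proof (rule sum.neutral, intro ballI)
      fix j assume "j \<in> {..<n}" then have j: "j < n" by auto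
      have "d j \<noteq> cis \<theta>" using cis_eq_iff[OF j th] nin j by auto
      then show "(Q *\<^sub>v v) $ j * (col P j \<bullet>c v) = 0"
        using iso_eig_orth[OF iso colP_car[OF j] vc eig[OF j] Av] by simp
    qed
    finally show False using cprod_self_zero[OF vc] v(2) by blast
  qed
qed

lemma eigphases_finite: "finite (eigphases n A)"
  using eigphases_sub finite_surj by blast

lemma spec_sum:
  assumes v: "v \<in> carrier_vec n"
  shows "(\<Sum>\<theta>\<in>eigphases n A. spec_weight n A v \<theta>) = sqnorm v"
proof -
  let ?c = "\<lambda>j. (Q *\<^sub>v v) $ j"
  define F where "F j k = ?c j * cnj (?c k) * (col P j \<bullet>c col P k)" for j k
  define H where "H j = (\<Sum>k<n. F j k)" for j
  define S where "S \<theta> = {j. j < n \<and> d j = cis \<theta>}" for \<theta>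
  have orthF: "F j k = 0" if "j < n" "k < n" "d j \<noteq> d k" for j k
    using iso_eig_orth[OF iso colP_car[OF that(1)] colP_car[OF that(2)] eig[OF that(1)] eig[OF that(2)] that(3)]
    unfolding F_def by simp
  have "complex_of_real (\<Sum>\<theta>\<in>eigphases n A. spec_weight n A v \<theta>)
      = (\<Sum>\<theta>\<in>eigphases n A. lc ?c (S \<theta>) \<bullet>c lc ?c (S \<theta>))"
    unfolding of_real_sum spec_weight_def spec_proj[OF v] S_def
    by (rule sum.cong[OF refl], rule sqnorm_cprod[of _ n], simp)
  also have "\<dots> = (\<Sum>\<theta>\<in>eigphases n A. \<Sum>j\<in>{j. j \<in> {..<n} \<and> Arg (d j) = \<theta>}. H j)"
  proof (rule sum.cong[OF refl])
    fix \<theta> assume th: "\<theta> \<in> eigphases n A"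
    have Seq: "S \<theta> = {j. j \<in> {..<n} \<and> Arg (d j) = \<theta>}" unfolding S_def using cis_eq_iff[OF _ th] by auto
    have "lc ?c (S \<theta>) \<bullet>c lc ?c (S \<theta>) = (\<Sum>j\<in>S \<theta>. \<Sum>k\<in>S \<theta>. F j k)"
      unfolding F_def by (rule lc_cprod2, auto simp: S_def)
    also have "\<dots> = (\<Sum>j\<in>S \<theta>. H j)"
    proof (rule sum.cong[OF refl])
      fix j assume j: "j \<in> S \<theta>"
      have jn: "j < n" and dj: "d j = cis \<theta>" using j unfolding S_def by auto
      show "(\<Sum>k\<in>S \<theta>. F j k) = H j" unfolding H_def
      proof (rule sum.mono_neutral_left)
        show "finite {..<n}" by simp
        show "S \<theta> \<subseteq> {..<n}" unfolding S_def by auto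
        show "\<forall>k\<in>{..<n} - S \<theta>. F j k = 0"
        proof
          fix k assume "k \<in> {..<n} - S \<theta>"
          then have k: "k < n" and dk: "d k \<noteq> cis \<theta>" unfolding S_def by auto
          show "F j k = 0" using orthF[OF jn k] dk dj by simp
        qed
      qed
    qed
    finally show "lc ?c (S \<theta>) \<bullet>c lc ?c (S \<theta>) = (\<Sum>j\<in>{j. j \<in> {..<n} \<and> Arg (d j) = \<theta>}. H j)"
      unfolding Seq .
  qed
  also have "\<dots> = (\<Sum>j<n. H j)"
    by (rule sum.group, simp, rule eigphases_finite, use Arg_in in auto)
  also have "\<dots> = lc ?c {..<n} \<bullet>c lc ?c {..<n}" unfolding H_def F_def by (rule lc_cprod2[symmetric], auto)
  also have "\<dots> = v \<bullet>c v" using lc_full[OF v] by simp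
  also have "\<dots> = complex_of_real (sqnorm v)" using sqnorm_cprod[OF v] by simp
  finally have "complex_of_real (sum (spec_weight n A v) (eigphases n A)) = complex_of_real (sqnorm v)" .
  then show ?thesis by (metis of_real_eq_iff)
qed

end



lemma cmat_index: "i < dim_row R \<Longrightarrow> j < dim_col R \<Longrightarrow> cmat R $$ (i,j) = complex_of_real (R $$ (i,j))"
  by (simp add: cmat_def)

lemma cmat_carrier[simp]: "R \<in> carrier_mat n m \<Longrightarrow> cmat R \<in> carrier_mat n m"
  by (simp add: cmat_def)

lemma cmat_dims[simp]: "dim_row (cmat R) = dim_row R" "dim_col (cmat R) = dim_col R"
  by (simp_all add: cmat_def)

lemma cvec_dim[simp]: "dim_vec (cvec v) = dim_vec v" by (simp add: cvec_def)

lemma cvec_carrier[simp]: "v \<in> carrier_vec n \<Longrightarrow> cvec v \<in> carrier_vec n"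
  by (simp add: cvec_def)

lemma cmat_mult: "R \<in> carrier_mat n k \<Longrightarrow> S \<in> carrier_mat k m \<Longrightarrow> cmat (R * S) = cmat R * cmat S"
  unfolding cmat_def by (rule of_real_hom.mat_hom_mult)

lemma cmat_mult_vec: "R \<in> carrier_mat n k \<Longrightarrow> v \<in> carrier_vec k \<Longrightarrow> cmat R *\<^sub>v cvec v = cvec (R *\<^sub>v v)"
  unfolding cmat_def cvec_def by (rule of_real_hom.mult_mat_vec_hom[symmetric])

lemma mat_vec_index_sum:
  fixes B :: "'a::comm_ring_1 mat"
  assumes "B \<in> carrier_mat n n" "x \<in> carrier_vec n" "i < n"
  shows "(B *\<^sub>v x) $ i = (\<Sum>j<n. B $$ (i,j) * x $ j)"
  using assms by (auto simp: scalar_prod_def lessThan_atLeast0 intro!: sum.cong)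

lemma cdot_sum:
  fixes x y :: "complex Matrix.vec"
  assumes "x \<in> carrier_vec n" "y \<in> carrier_vec n"
  shows "x \<bullet>c y = (\<Sum>i<n. x $ i * cnj (y $ i))"
  using assms unfolding scalar_prod_def by (auto simp: lessThan_atLeast0 intro!: sum.cong)

lemma real_orth_iso:
  assumes R: "R \<in> carrier_mat n n" and orth: "transpose_mat R * R = 1\<^sub>m n"
  shows "iso n (cmat R)"
  unfolding iso_def
proof (intro conjI ballI)
  show "cmat R \<in> carrier_mat n n" using R by simp
  fix x y :: "complex Matrix.vec" assume x: "x \<in> carrier_vec n" and y: "y \<in> carrier_vec n"
  let ?r = "\<lambda>i j. complex_of_real (R $$ (i,j))"
  have RR: "(\<Sum>i<n. ?r i j * ?r i k) = (if j = k then 1 else 0)" if "j < n" "k < n" for j k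
  proof -
    have "(transpose_mat R * R) $$ (j,k) = (\<Sum>i<n. R $$ (i,j) * R $$ (i,k))"
      using R that by (auto simp: scalar_prod_def lessThan_atLeast0 intro!: sum.cong)
    then have "(\<Sum>i<n. R $$ (i,j) * R $$ (i,k)) = (if j = k then 1 else 0)" using orth that by simp
    moreover have "(\<Sum>i<n. ?r i j * ?r i k) = complex_of_real (\<Sum>i<n. R $$ (i,j) * R $$ (i,k))" by simp
    ultimately show ?thesis by simp
  qed
  have cx: "(cmat R *\<^sub>v x) $ i = (\<Sum>j<n. ?r i j * x $ j)" if "i < n" for i
    using mat_vec_index_sum[of "cmat R" n x i] R x that by (auto simp: cmat_index intro!: sum.cong)
  have cy: "(cmat R *\<^sub>v y) $ i = (\<Sum>j<n. ?r i j * y $ j)" if "i < n" for i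
    using mat_vec_index_sum[of "cmat R" n y i] R y that by (auto simp: cmat_index intro!: sum.cong)
  have cRx: "cmat R *\<^sub>v x \<in> carrier_vec n" and cRy: "cmat R *\<^sub>v y \<in> carrier_vec n"
    using mult_mat_vec_carrier[OF cmat_carrier[OF R]] x y by auto
  have "(cmat R *\<^sub>v x) \<bullet>c (cmat R *\<^sub>v y) = (\<Sum>i<n. (cmat R *\<^sub>v x) $ i * cnj ((cmat R *\<^sub>v y) $ i))"
    by (rule cdot_sum[OF cRx cRy])
  also have "\<dots> = (\<Sum>i<n. (\<Sum>j<n. ?r i j * x $ j) * cnj (\<Sum>k<n. ?r i k * y $ k))"
  proof (rule sum.cong[OF refl])
    fix i assume "i \<in> {..<n}" then have i: "i < n" by simp
    show "(cmat R *\<^sub>v x) $ i * cnj ((cmat R *\<^sub>v y) $ i) = (\<Sum>j<n. ?r i j * x $ j) * cnj (\<Sum>k<n. ?r i k * y $ k)"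
      by (subst cx[OF i], subst cy[OF i], rule refl)
  qed
  also have "\<dots> = (\<Sum>i<n. \<Sum>j<n. \<Sum>k<n. x $ j * cnj (y $ k) * (?r i j * ?r i k))"
  proof (rule sum.cong[OF refl])
    fix i
    have "(\<Sum>j<n. ?r i j * x $ j) * cnj (\<Sum>k<n. ?r i k * y $ k) = (\<Sum>j<n. ?r i j * x $ j) * (\<Sum>k<n. cnj (?r i k * y $ k))"
      by (simp only: cnj_sum)
    also have "\<dots> = (\<Sum>j<n. \<Sum>k<n. (?r i j * x $ j) * cnj (?r i k * y $ k))"
      by (rule sum_product)
    also have "\<dots> = (\<Sum>j<n. \<Sum>k<n. x $ j * cnj (y $ k) * (?r i j * ?r i k))"
    proof (rule sum.cong[OF refl], rule sum.cong[OF refl])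
      fix j k
      show "(?r i j * x $ j) * cnj (?r i k * y $ k) = x $ j * cnj (y $ k) * (?r i j * ?r i k)"
        by (simp only: complex_cnj_mult complex_cnj_complex_of_real mult_ac)
    qed
    finally show "(\<Sum>j<n. ?r i j * x $ j) * cnj (\<Sum>k<n. ?r i k * y $ k) = (\<Sum>j<n. \<Sum>k<n. x $ j * cnj (y $ k) * (?r i j * ?r i k))" .
  qed
  also have "\<dots> = (\<Sum>j<n. \<Sum>i<n. \<Sum>k<n. x $ j * cnj (y $ k) * (?r i j * ?r i k))"
    by (rule sum.swap)
  also have "\<dots> = (\<Sum>j<n. \<Sum>k<n. \<Sum>i<n. x $ j * cnj (y $ k) * (?r i j * ?r i k))"
    by (rule sum.cong[OF refl], rule sum.swap)
  also have "\<dots> = (\<Sum>j<n. \<Sum>k<n. (if k = j then x $ j * cnj (y $ k) else 0))"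
  proof (rule sum.cong[OF refl], rule sum.cong[OF refl])
    fix j k assume "j \<in> {..<n}" "k \<in> {..<n}"
    then have j: "j < n" and k: "k < n" by auto
    have "(\<Sum>i<n. x $ j * cnj (y $ k) * (?r i j * ?r i k)) = x $ j * cnj (y $ k) * (\<Sum>i<n. ?r i j * ?r i k)"
      by (simp only: sum_distrib_left)
    also have "\<dots> = (if k = j then x $ j * cnj (y $ k) else 0)" unfolding RR[OF j k] by auto
    finally show "(\<Sum>i<n. x $ j * cnj (y $ k) * (?r i j * ?r i k)) = (if k = j then x $ j * cnj (y $ k) else 0)" .
  qed
  also have "\<dots> = (\<Sum>j<n. x $ j * cnj (y $ j))"
    by (rule sum.cong[OF refl]) (simp only: sum.delta finite_lessThan, simp)
  also have "\<dots> = x \<bullet>c y" by (rule cdot_sum[symmetric, OF x y])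
  finally show "(cmat R *\<^sub>v x) \<bullet>c (cmat R *\<^sub>v y) = x \<bullet>c y" .
qed

lemma iso_mult:
  assumes "iso n B" "iso n C" shows "iso n (B * C)"
proof -
  have B: "B \<in> carrier_mat n n" and C: "C \<in> carrier_mat n n" using assms unfolding iso_def by auto
  show ?thesis unfolding iso_def
  proof (intro conjI ballI)
    show "B * C \<in> carrier_mat n n" using B C by simp
    fix x y :: "complex Matrix.vec" assume x: "x \<in> carrier_vec n" and y: "y \<in> carrier_vec n"
    have "((B * C) *\<^sub>v x) \<bullet>c ((B * C) *\<^sub>v y) = (B *\<^sub>v (C *\<^sub>v x)) \<bullet>c (B *\<^sub>v (C *\<^sub>v y))"
      using B C x y by simp
    also have "\<dots> = (C *\<^sub>v x) \<bullet>c (C *\<^sub>v y)" using assms(1) C x y unfolding iso_def by simp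
    also have "\<dots> = x \<bullet>c y" using assms(2) x y unfolding iso_def by simp
    finally show "((B * C) *\<^sub>v x) \<bullet>c ((B * C) *\<^sub>v y) = x \<bullet>c y" .
  qed
qed

lemma U1_dims[simp]: "dim_row (U1 n \<mu>) = n" "dim_col (U1 n \<mu>) = n" by (simp_all add: U1_def)

lemma U1_carrier[simp]: "U1 n \<mu> \<in> carrier_mat n n" by (rule carrier_matI, simp_all)

lemma U1_index: "i < n \<Longrightarrow> j < n \<Longrightarrow> U1 n \<mu> $$ (i,j) = (if i = j then 1 else 0) - 2 * \<mu> $ i * \<mu> $ j"
  by (simp add: U1_def)

lemma U1_orth:
  assumes mu: "\<mu> \<in> carrier_vec n" "rsqnorm \<mu> = 1"
  shows "transpose_mat (U1 n \<mu>) * U1 n \<mu> = 1\<^sub>m n"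
proof (rule eq_matI)
  fix j k assume "j < dim_row (1\<^sub>m n :: real mat)" "k < dim_col (1\<^sub>m n :: real mat)"
  then have j: "j < n" and k: "k < n" by auto
  have ss: "(\<Sum>i<n. \<mu> $ i * \<mu> $ i) = 1" using mu unfolding rsqnorm_def by (simp add: power2_eq_square)
  have "(transpose_mat (U1 n \<mu>) * U1 n \<mu>) $$ (j,k) = (\<Sum>i<n. U1 n \<mu> $$ (i,j) * U1 n \<mu> $$ (i,k))"
    using j k by (auto simp: scalar_prod_def lessThan_atLeast0 intro!: sum.cong)
  also have "\<dots> = (\<Sum>i<n. (if i = j then (if i = k then 1 else 0) - 2 * \<mu> $ i * \<mu> $ k else 0)
      - (if i = k then 2 * \<mu> $ i * \<mu> $ j else 0) + 4 * (\<mu> $ j * \<mu> $ k) * (\<mu> $ i * \<mu> $ i))"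
  proof (rule sum.cong[OF refl])
    fix i assume "i \<in> {..<n}" then have i: "i < n" by simp
    show "U1 n \<mu> $$ (i,j) * U1 n \<mu> $$ (i,k) = (if i = j then (if i = k then 1 else 0) - 2 * \<mu> $ i * \<mu> $ k else 0)
      - (if i = k then 2 * \<mu> $ i * \<mu> $ j else 0) + 4 * (\<mu> $ j * \<mu> $ k) * (\<mu> $ i * \<mu> $ i)"
      unfolding U1_index[OF i j] U1_index[OF i k]
      by (cases "i = j"; cases "i = k"; simp add: algebra_simps)
  qed
  also have "\<dots> = ((if j = k then 1 else 0) - 2 * \<mu> $ j * \<mu> $ k) - 2 * \<mu> $ k * \<mu> $ j
      + 4 * (\<mu> $ j * \<mu> $ k) * (\<Sum>i<n. \<mu> $ i * \<mu> $ i)"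
    using j k by (simp only: sum.distrib sum_subtractf sum_distrib_left[symmetric] sum.delta finite_lessThan lessThan_iff if_True)
  also have "\<dots> = (1\<^sub>m n) $$ (j,k)" using j k ss by simp
  finally show "(transpose_mat (U1 n \<mu>) * U1 n \<mu>) $$ (j,k) = (1\<^sub>m n) $$ (j,k)" .
qed (auto)

lemma cU1:
  assumes mu: "\<mu> \<in> carrier_vec n" and x: "x \<in> carrier_vec n"
  shows "cmat (U1 n \<mu>) *\<^sub>v x = x - (2 * (cvec \<mu> \<bullet> x)) \<cdot>\<^sub>v cvec \<mu>"
proof (rule eq_vecI)
  fix i assume "i < dim_vec (x - (2 * (cvec \<mu> \<bullet> x)) \<cdot>\<^sub>v cvec \<mu>)"
  then have i: "i < n" using x mu by (auto simp: cvec_def)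
  have dot: "cvec \<mu> \<bullet> x = (\<Sum>k<n. complex_of_real (\<mu> $ k) * x $ k)"
    using mu x unfolding scalar_prod_def cvec_def by (auto simp: lessThan_atLeast0 intro!: sum.cong)
  have "(cmat (U1 n \<mu>) *\<^sub>v x) $ i = (\<Sum>k<n. complex_of_real (U1 n \<mu> $$ (i,k)) * x $ k)"
    using mat_vec_index_sum[of "cmat (U1 n \<mu>)" n x i] x i by (auto simp: cmat_index intro!: sum.cong)
  also have "\<dots> = (\<Sum>k<n. (if k = i then x $ k else 0) - 2 * complex_of_real (\<mu> $ i) * (complex_of_real (\<mu> $ k) * x $ k))"
  proof (rule sum.cong[OF refl])
    fix k assume "k \<in> {..<n}" then have k: "k < n" by simp
    show "complex_of_real (U1 n \<mu> $$ (i,k)) * x $ k = (if k = i then x $ k else 0) - 2 * complex_of_real (\<mu> $ i) * (complex_of_real (\<mu> $ k) * x $ k)"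
      unfolding U1_index[OF i k] by (cases "k = i"; simp add: algebra_simps)
  qed
  also have "\<dots> = x $ i - 2 * complex_of_real (\<mu> $ i) * (cvec \<mu> \<bullet> x)"
    using i by (simp add: sum_subtractf sum_distrib_left[symmetric] dot)
  also have "\<dots> = (x - (2 * (cvec \<mu> \<bullet> x)) \<cdot>\<^sub>v cvec \<mu>) $ i" using i x mu by (simp add: cvec_def)
  finally show "(cmat (U1 n \<mu>) *\<^sub>v x) $ i = (x - (2 * (cvec \<mu> \<bullet> x)) \<cdot>\<^sub>v cvec \<mu>) $ i" .
qed (use x mu in auto)

lemma sqnorm_cvec: "sqnorm (cvec v) = rsqnorm v"
  unfolding sqnorm_def rsqnorm_def cvec_def by simp

lemma cvec_dot: "\<mu> \<in> carrier_vec n \<Longrightarrow> v \<in> carrier_vec n \<Longrightarrow> cvec \<mu> \<bullet> cvec v = complex_of_real (scalar_prod \<mu> v)"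
  unfolding scalar_prod_def cvec_def by simp

lemma cvec_cdot: "\<mu> \<in> carrier_vec n \<Longrightarrow> v \<in> carrier_vec n \<Longrightarrow> cvec \<mu> \<bullet>c cvec v = complex_of_real (scalar_prod \<mu> v)"
  unfolding scalar_prod_def cvec_def by simp

lemma rsqnorm_phitilde:
  assumes "\<mu> \<in> carrier_vec n" "\<phi> \<in> carrier_vec n" "rsqnorm \<mu> = 1" "rsqnorm \<phi> = 1"
  shows "rsqnorm (phitilde \<phi> \<mu>) = 1 - (scalar_prod \<mu> \<phi>)\<^sup>2"
proof -
  let ?a = "scalar_prod \<mu> \<phi>"
  have a: "?a = (\<Sum>i<n. \<mu> $ i * \<phi> $ i)" using assms unfolding scalar_prod_def by (simp add: lessThan_atLeast0)
  have m: "(\<Sum>i<n. (\<mu> $ i)\<^sup>2) = 1" and p: "(\<Sum>i<n. (\<phi> $ i)\<^sup>2) = 1" using assms unfolding rsqnorm_def by auto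
  have "rsqnorm (phitilde \<phi> \<mu>) = (\<Sum>i<n. (\<phi> $ i - ?a * \<mu> $ i)\<^sup>2)"
    using assms unfolding rsqnorm_def phitilde_def by (auto intro!: sum.cong)
  also have "\<dots> = (\<Sum>i<n. (\<phi> $ i)\<^sup>2) - 2 * ?a * (\<Sum>i<n. \<mu> $ i * \<phi> $ i) + ?a\<^sup>2 * (\<Sum>i<n. (\<mu> $ i)\<^sup>2)"
  proof -
    have "(\<Sum>i<n. (\<phi> $ i - ?a * \<mu> $ i)\<^sup>2) = (\<Sum>i<n. (\<phi> $ i)\<^sup>2 - 2 * ?a * (\<mu> $ i * \<phi> $ i) + ?a\<^sup>2 * (\<mu> $ i)\<^sup>2)"
      by (intro sum.cong refl) (simp add: power2_eq_square algebra_simps)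
    then show ?thesis by (simp only: sum.distrib sum_subtractf sum_distrib_left)
  qed
  also have "\<dots> = 1 - ?a\<^sup>2" unfolding m p a[symmetric] by (simp add: power2_eq_square)
  finally show ?thesis .
qed



lemma cprod_smult_left:
  fixes x y :: "complex Matrix.vec"
  assumes "x \<in> carrier_vec n" "y \<in> carrier_vec n"
  shows "(a \<cdot>\<^sub>v x) \<bullet>c y = a * (x \<bullet>c y)"
  using assms by (simp add: scalar_prod_def conjugate_vec_def sum_distrib_left algebra_simps)

lemma dot_smult_right:
  fixes x y :: "complex Matrix.vec"
  assumes "x \<in> carrier_vec n" "y \<in> carrier_vec n"
  shows "x \<bullet> (a \<cdot>\<^sub>v y) = a * (x \<bullet> y)"
  using assms by (simp add: scalar_prod_def sum_distrib_left algebra_simps)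

lemma orth_proj_other:
  assumes iso: "iso n A" and psi: "psi \<in> eigspace n A l0" and l: "l \<noteq> l0"
  shows "orth_proj (eigspace n A l) psi = 0\<^sub>v n"
proof -
  have A: "A \<in> carrier_mat n n" using iso unfolding iso_def by auto
  have pc: "psi \<in> carrier_vec n" and Ap: "A *\<^sub>v psi = l0 \<cdot>\<^sub>v psi" using psi unfolding eigspace_def by auto
  show ?thesis
  proof (rule orth_proj_eq[OF eigspace_sub[OF A] _ pc])
    show "0\<^sub>v n \<in> eigspace n A l" unfolding eigspace_def using A by auto
    fix w assume "w \<in> eigspace n A l"
    then have wc: "w \<in> carrier_vec n" and Aw: "A *\<^sub>v w = l \<cdot>\<^sub>v w" unfolding eigspace_def by auto
    have "psi - 0\<^sub>v n = psi" using pc by simp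
    then show "(psi - 0\<^sub>v n) \<bullet>c w = 0" using iso_eig_orth[OF iso pc wc Ap Aw] l by simp
  qed
qed

lemma sqnorm_nonneg: "0 \<le> sqnorm v" unfolding sqnorm_def by (simp add: sum_nonneg)

lemma sqnorm_zero[simp]: "sqnorm (0\<^sub>v n) = 0" unfolding sqnorm_def by simp

lemma tail_bound:
  fixes E :: "real set" and w :: "real \<Rightarrow> real" and \<epsilon> T :: real
  assumes fin: "finite E" and wnn: "\<And>\<theta>. \<theta> \<in> E \<Longrightarrow> 0 \<le> w \<theta>" and eps: "0 \<le> \<epsilon>"
    and T: "T \<ge> Inf {y. 0 \<le> y \<and> (\<Sum>\<theta>\<in>{\<theta> \<in> E. \<theta> \<noteq> 0 \<and> 1 / \<bar>\<theta>\<bar> > y}. w \<theta>) \<le> \<epsilon>}"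
  shows "(\<Sum>\<theta>\<in>{\<theta> \<in> E. \<theta> \<noteq> 0 \<and> 1 / \<bar>\<theta>\<bar> > T}. w \<theta>) \<le> \<epsilon>"
proof -
  define tl where "tl y = (\<Sum>\<theta>\<in>{\<theta> \<in> E. \<theta> \<noteq> 0 \<and> 1 / \<bar>\<theta>\<bar> > y}. w \<theta>)" for y
  define Y where "Y = {y. 0 \<le> y \<and> tl y \<le> \<epsilon>}"
  have mono: "tl y' \<le> tl y" if "y \<le> y'" for y y'
    unfolding tl_def by (rule sum_mono2) (use fin that wnn in auto)
  define J where "J = (\<lambda>\<theta>. 1 / \<bar>\<theta>\<bar>) ` E"
  have finJ: "finite J" using fin unfolding J_def by simp
  define y0 where "y0 = Max (insert 0 J)"
  have y0: "0 \<le> y0" unfolding y0_def using finJ by simp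
  have "tl y0 = 0" unfolding tl_def
  proof (rule sum.neutral, intro ballI)
    fix \<theta> assume "\<theta> \<in> {\<theta> \<in> E. \<theta> \<noteq> 0 \<and> 1 / \<bar>\<theta>\<bar> > y0}"
    then have "\<theta> \<in> E" "1 / \<bar>\<theta>\<bar> > y0" by auto
    moreover have "1 / \<bar>\<theta>\<bar> \<le> y0" unfolding y0_def using finJ \<open>\<theta> \<in> E\<close> unfolding J_def by (simp add: Max_ge_iff)
    ultimately show "w \<theta> = 0" by simp
  qed
  then have Yne: "Y \<noteq> {}" unfolding Y_def using y0 eps by auto
  show ?thesis
  proof (rule ccontr)
    assume "\<not> ?thesis"
    then have big: "tl T > \<epsilon>" unfolding tl_def by simp
    define G where "G = (\<lambda>\<theta>. 1 / \<bar>\<theta>\<bar> - T) ` {\<theta> \<in> E. \<theta> \<noteq> 0 \<and> 1 / \<bar>\<theta>\<bar> > T}"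
    have finG: "finite G" using fin unfolding G_def by simp
    define \<delta> where "\<delta> = Min (insert 1 G)"
    have dpos: "0 < \<delta>" unfolding \<delta>_def using finG unfolding G_def by auto
    have dle: "\<delta> \<le> 1 / \<bar>\<theta>\<bar> - T" if "\<theta> \<in> E" "\<theta> \<noteq> 0" "1 / \<bar>\<theta>\<bar> > T" for \<theta>
      unfolding \<delta>_def using finG that unfolding G_def by auto
    have "Inf Y < T + \<delta>" using T dpos unfolding Y_def tl_def by simp
    then obtain y where y: "y \<in> Y" "y < T + \<delta>" using cInf_lessD[OF Yne] by blast
    have "tl T \<le> tl y"
    proof (cases "y \<le> T")
      case True then show ?thesis using mono by blast
    next
      case False
      have eq: "(\<theta> \<in> E \<and> \<theta> \<noteq> 0 \<and> 1 / \<bar>\<theta>\<bar> > T) \<longleftrightarrow> (\<theta> \<in> E \<and> \<theta> \<noteq> 0 \<and> 1 / \<bar>\<theta>\<bar> > y)" for \<theta>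
      proof
        assume h: "\<theta> \<in> E \<and> \<theta> \<noteq> 0 \<and> 1 / \<bar>\<theta>\<bar> > T"
        then have "\<delta> \<le> 1 / \<bar>\<theta>\<bar> - T" using dle by blast
        then show "\<theta> \<in> E \<and> \<theta> \<noteq> 0 \<and> 1 / \<bar>\<theta>\<bar> > y" using h y(2) by linarith
      next
        assume "\<theta> \<in> E \<and> \<theta> \<noteq> 0 \<and> 1 / \<bar>\<theta>\<bar> > y"
        then show "\<theta> \<in> E \<and> \<theta> \<noteq> 0 \<and> 1 / \<bar>\<theta>\<bar> > T" using False by linarith
      qed
      then have "{\<theta> \<in> E. \<theta> \<noteq> 0 \<and> 1 / \<bar>\<theta>\<bar> > T} = {\<theta> \<in> E. \<theta> \<noteq> 0 \<and> 1 / \<bar>\<theta>\<bar> > y}" by blast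
      then show ?thesis unfolding tl_def by simp
    qed
    also have "\<dots> \<le> \<epsilon>" using y(1) unfolding Y_def by simp
    finally show False using big by simp
  qed
qed

lemma q_bound:
  assumes pe: "is_phase_estimator est cnt K" and D: "0 < D"
    and th: "- pi < \<theta>" "\<theta> \<le> pi" and big: "D \<le> \<bar>\<theta>\<bar>"
  shows "pmf (est D \<theta>) 0 \<le> 1/3"
proof -
  let ?S = "{x. circ_dist x \<theta> < D}"
  have pS: "measure_pmf.prob (est D \<theta>) ?S \<ge> 2/3" using pe D th unfolding is_phase_estimator_def by blast
  have cd: "circ_dist 0 \<theta> = \<bar>\<theta>\<bar>" unfolding circ_dist_def using th by (auto simp: min_def)
  have "0 \<notin> ?S" using cd big by simp
  then have disj: "{0} \<inter> ?S = {}" by auto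
  have "measure_pmf.prob (est D \<theta>) ({0} \<union> ?S) = measure_pmf.prob (est D \<theta>) {0} + measure_pmf.prob (est D \<theta>) ?S"
    by (rule measure_pmf.finite_measure_Union) (use disj in auto)
  moreover have "measure_pmf.prob (est D \<theta>) ({0} \<union> ?S) \<le> 1" by (rule measure_pmf.prob_le_1)
  ultimately have "measure_pmf.prob (est D \<theta>) {0} \<le> 1/3" using pS by linarith
  then show ?thesis by (simp add: measure_pmf_single)
qed

lemma pow_bound:
  fixes q \<epsilon> :: real
  assumes q: "0 \<le> q" "q \<le> 1/3" and eps: "0 < \<epsilon>" "\<epsilon> < 1" and m: "ln (1/\<epsilon>) \<le> real m"
  shows "q ^ m \<le> \<epsilon>"
proof -
  have e3: "1/3 \<le> exp (-1::real)"
  proof -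
    have "inverse (3::real) \<le> inverse (exp 1)" by (rule le_imp_inverse_le[OF exp_le]) simp
    moreover have "exp (-1::real) = inverse (exp 1)" by (rule exp_minus)
    moreover have "inverse (3::real) = 1/3" by simp
    ultimately show ?thesis by linarith
  qed
  have "q ^ m \<le> (1/3) ^ m" using q by (intro power_mono) auto
  also have "\<dots> \<le> exp (-1) ^ m" by (rule power_mono[OF e3]) simp
  also have "exp (-1) ^ m = exp (real m * (-1))" by (rule exp_of_nat_mult[symmetric])
  also have "real m * (-1) = - real m" by simp
  also have "exp (- real m) \<le> exp (- ln (1/\<epsilon>))" using m by (simp only: exp_le_cancel_iff)
  also have "- ln (1/\<epsilon>) = ln \<epsilon>" using eps by (simp add: ln_div)
  also have "exp (ln \<epsilon>) = \<epsilon>" using eps by simp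
  finally show ?thesis .
qed

lemma m_upper:
  fixes \<epsilon> :: real
  assumes "0 < \<epsilon>" "\<epsilon> < 1"
  shows "real (nat \<lceil>1 * ln (1 / \<epsilon>)\<rceil>) \<le> 1 + ln (1/\<epsilon>)"
proof -
  have "0 \<le> ln (1/\<epsilon>)" using assms by simp
  then show ?thesis by linarith
qed

lemma eig1_trivial:
  assumes U2c: "U2 \<in> carrier_mat n n" and U2o: "transpose_mat U2 * U2 = 1\<^sub>m n"
    and phic: "\<phi>0 \<in> carrier_vec n" and phif: "U2 *\<^sub>v \<phi>0 = \<phi>0"
    and uniq: "\<forall>v \<in> carrier_vec n. cmat U2 *\<^sub>v v = v \<longrightarrow> (\<exists>a::complex. v = a \<cdot>\<^sub>v cvec \<phi>0)"
    and mu: "\<mu> \<in> carrier_vec n"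
    and nz: "scalar_prod \<mu> \<phi>0 \<noteq> 0"
    and v: "v \<in> eigspace n (cmat (U2 * U1 n \<mu>)) 1"
  shows "v = 0\<^sub>v n"
proof -
  define M where "M = cvec \<mu>"
  define F where "F = cvec \<phi>0"
  have vc: "v \<in> carrier_vec n" and Av: "cmat (U2 * U1 n \<mu>) *\<^sub>v v = 1 \<cdot>\<^sub>v v"
    using v unfolding eigspace_def by auto
  have Fc: "F \<in> carrier_vec n" unfolding F_def using phic by simp
  have Mc: "M \<in> carrier_vec n" unfolding M_def using mu by simp
  have A: "cmat (U2 * U1 n \<mu>) = cmat U2 * cmat (U1 n \<mu>)" by (rule cmat_mult[OF U2c U1_carrier])
  define w where "w = cmat (U1 n \<mu>) *\<^sub>v v"
  have wc: "w \<in> carrier_vec n" unfolding w_def using vc mult_mat_vec_carrier[OF cmat_carrier[OF U1_carrier]] by blast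
  have w: "w = v - (2 * (M \<bullet> v)) \<cdot>\<^sub>v M" unfolding w_def M_def by (rule cU1[OF mu vc])
  have "cmat U2 *\<^sub>v w = (cmat U2 * cmat (U1 n \<mu>)) *\<^sub>v v"
    unfolding w_def using U2c vc by (simp add: assoc_mult_mat_vec[of _ n n _ n])
  also have "\<dots> = v" using Av unfolding A using vc by simp
  finally have U2w: "cmat U2 *\<^sub>v w = v" .
  have UF: "cmat U2 *\<^sub>v F = F" unfolding F_def using cmat_mult_vec[OF U2c phic] phif by simp
  have iso2: "iso n (cmat U2)" by (rule real_orth_iso[OF U2c U2o])
  have sMc: "(2 * (M \<bullet> v)) \<cdot>\<^sub>v M \<in> carrier_vec n" using Mc by simp
  have "v \<bullet>c F = (cmat U2 *\<^sub>v w) \<bullet>c (cmat U2 *\<^sub>v F)" using U2w UF by simp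
  also have "\<dots> = w \<bullet>c F" using iso2 wc Fc unfolding iso_def by blast
  also have "\<dots> = v \<bullet>c F - ((2 * (M \<bullet> v)) \<cdot>\<^sub>v M) \<bullet>c F" unfolding w by (rule cprod_minus_left[OF vc sMc Fc])
  also have "((2 * (M \<bullet> v)) \<cdot>\<^sub>v M) \<bullet>c F = (2 * (M \<bullet> v)) * (M \<bullet>c F)" by (rule cprod_smult_left[OF Mc Fc])
  finally have "(2 * (M \<bullet> v)) * (M \<bullet>c F) = 0" by simp
  moreover have "M \<bullet>c F = complex_of_real (scalar_prod \<mu> \<phi>0)" unfolding M_def F_def by (rule cvec_cdot[OF mu phic])
  ultimately have Mv: "M \<bullet> v = 0" using nz by simp
  have "w = v" unfolding w Mv using vc Mc by (intro eq_vecI) auto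
  then have "cmat U2 *\<^sub>v v = v" using U2w by simp
  then obtain a where va: "v = a \<cdot>\<^sub>v F" using uniq vc unfolding F_def by blast
  have "M \<bullet> v = a * (M \<bullet> F)" unfolding va by (rule dot_smult_right[OF Mc Fc])
  also have "M \<bullet> F = complex_of_real (scalar_prod \<mu> \<phi>0)" unfolding M_def F_def by (rule cvec_dot[OF mu phic])
  finally have "a = 0" using Mv nz by simp
  then show ?thesis unfolding va using Fc by (intro eq_vecI) auto
qed

lemma phi_eig:
  assumes U2c: "U2 \<in> carrier_mat n n"
    and phic: "\<phi>0 \<in> carrier_vec n" and phif: "U2 *\<^sub>v \<phi>0 = \<phi>0"
    and mu: "\<mu> \<in> carrier_vec n" and z: "scalar_prod \<mu> \<phi>0 = 0"
  shows "cvec (phitilde \<phi>0 \<mu>) \<in> eigspace n (cmat (U2 * U1 n \<mu>)) 1"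
proof -
  define F where "F = cvec \<phi>0"
  have Fc: "F \<in> carrier_vec n" unfolding F_def using phic by simp
  have pt: "phitilde \<phi>0 \<mu> = \<phi>0" unfolding phitilde_def z using phic mu by (intro eq_vecI) auto
  have d0: "cvec \<mu> \<bullet> F = 0" unfolding F_def using cvec_dot[OF mu phic] z by simp
  have U1F: "cmat (U1 n \<mu>) *\<^sub>v F = F" unfolding cU1[OF mu Fc] d0 using Fc mu by (intro eq_vecI) auto
  have A: "cmat (U2 * U1 n \<mu>) = cmat U2 * cmat (U1 n \<mu>)" by (rule cmat_mult[OF U2c U1_carrier])
  have "cmat (U2 * U1 n \<mu>) *\<^sub>v F = cmat U2 *\<^sub>v (cmat (U1 n \<mu>) *\<^sub>v F)"
    unfolding A using U2c Fc by (simp add: assoc_mult_mat_vec[of _ n n _ n])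
  also have "\<dots> = F" using U1F cmat_mult_vec[OF U2c phic] phif unfolding F_def by simp
  finally have "cmat (U2 * U1 n \<mu>) *\<^sub>v F = 1 \<cdot>\<^sub>v F" using Fc by simp
  then show ?thesis unfolding eigspace_def pt F_def[symmetric] using Fc by simp
qed

theorem theorem5:
  shows "\<exists>c>0. \<exists>C>0. \<forall>(est :: real \<Rightarrow> real \<Rightarrow> real pmf) (cnt :: real \<Rightarrow> nat) (K :: real).
    is_phase_estimator est cnt K \<longrightarrow>
    (\<forall>(n :: nat) (U2 :: real mat) (\<mu> :: real Matrix.vec) (\<phi>0 :: real Matrix.vec) (\<epsilon> :: real) (T :: real).
      U2 \<in> carrier_mat n n \<and> transpose_mat U2 * U2 = 1\<^sub>m n \<and>
      \<phi>0 \<in> carrier_vec n \<and> U2 *\<^sub>v \<phi>0 = \<phi>0 \<and> rsqnorm \<phi>0 = 1 \<and>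
      (\<forall>v \<in> carrier_vec n. cmat U2 *\<^sub>v v = v \<longrightarrow> (\<exists>a::complex. v = a \<cdot>\<^sub>v cvec \<phi>0)) \<and>
      \<mu> \<in> carrier_vec n \<and> rsqnorm \<mu> = 1 \<and>
      0 < \<epsilon> \<and> \<epsilon> < 1 \<and> T \<ge> max 1 (QHT n U2 \<mu> \<phi>0 \<epsilon>)
      \<longrightarrow>
      (let m = nat \<lceil>c * ln (1 / \<epsilon>)\<rceil>;
           p = detect_accept est m (1 / T) n (cmat (U2 * U1 n \<mu>)) (cvec (phitilde \<phi>0 \<mu>))
       in (scalar_prod \<mu> \<phi>0 \<noteq> 0 \<longrightarrow> \<bar>p - rsqnorm (phitilde \<phi>0 \<mu>)\<bar> \<le> C * \<epsilon>) \<and>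
          (scalar_prod \<mu> \<phi>0 = 0 \<longrightarrow> p = 0) \<and>
          real (detect_calls cnt m (1 / T)) \<le> C * K * (1 + ln (1 / \<epsilon>)) * T))"
  apply (rule exI[where x="1::real"], rule conjI, simp)
  apply (rule exI[where x="2::real"], rule conjI, simp)
  apply (intro allI impI)
  subgoal premises prems for est cnt K n U2 \<mu> \<phi>0 \<epsilon> T
  proof -
    have pe: "is_phase_estimator est cnt K" using prems(1) .
    have H: "U2 \<in> carrier_mat n n \<and> transpose_mat U2 * U2 = 1\<^sub>m n \<and>
      \<phi>0 \<in> carrier_vec n \<and> U2 *\<^sub>v \<phi>0 = \<phi>0 \<and> rsqnorm \<phi>0 = 1 \<and>
      (\<forall>v \<in> carrier_vec n. cmat U2 *\<^sub>v v = v \<longrightarrow> (\<exists>a::complex. v = a \<cdot>\<^sub>v cvec \<phi>0)) \<and>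
      \<mu> \<in> carrier_vec n \<and> rsqnorm \<mu> = 1 \<and>
      0 < \<epsilon> \<and> \<epsilon> < 1 \<and> T \<ge> max 1 (QHT n U2 \<mu> \<phi>0 \<epsilon>)" using prems(2) .
    from H have U2c: "U2 \<in> carrier_mat n n" by blast
    from H have U2o: "transpose_mat U2 * U2 = 1\<^sub>m n" by blast
    from H have phic: "\<phi>0 \<in> carrier_vec n" by blast
    from H have phif: "U2 *\<^sub>v \<phi>0 = \<phi>0" by blast
    from H have phin: "rsqnorm \<phi>0 = 1" by blast
    from H have uniq: "\<forall>v \<in> carrier_vec n. cmat U2 *\<^sub>v v = v \<longrightarrow> (\<exists>a::complex. v = a \<cdot>\<^sub>v cvec \<phi>0)" by blast
    from H have muc: "\<mu> \<in> carrier_vec n" by blast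
    from H have mun: "rsqnorm \<mu> = 1" by blast
    from H have e0: "0 < \<epsilon>" by blast
    from H have e1: "\<epsilon> < 1" by blast
    from H have Tq: "T \<ge> max 1 (QHT n U2 \<mu> \<phi>0 \<epsilon>)" by blast
    define m where "m = nat \<lceil>(1::real) * ln (1 / \<epsilon>)\<rceil>"
    define A where "A = cmat (U2 * U1 n \<mu>)"
    define \<psi> where "\<psi> = cvec (phitilde \<phi>0 \<mu>)"
    define D where "D = 1 / T"
    define E where "E = eigphases n A"
    define w where "w \<theta> = spec_weight n A \<psi> \<theta>" for \<theta>
    define q where "q \<theta> = pmf (est D \<theta>) 0" for \<theta>
    define p where "p = detect_accept est m D n A \<psi>"
    have p_eq: "p = (\<Sum>\<theta>\<in>E. w \<theta> * (1 - q \<theta> ^ m))"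
      unfolding p_def detect_accept_def E_def w_def q_def ..
    have T1: "1 \<le> T" using Tq by simp
    have Dpos: "0 < D" unfolding D_def using T1 by simp
    have Acar: "A \<in> carrier_mat n n" unfolding A_def using U2c by simp
    have iso: "iso n A"
    proof -
      have "A = cmat U2 * cmat (U1 n \<mu>)" unfolding A_def by (rule cmat_mult[OF U2c U1_carrier])
      moreover have "iso n (cmat U2)" by (rule real_orth_iso[OF U2c U2o])
      moreover have "iso n (cmat (U1 n \<mu>))" by (rule real_orth_iso[OF U1_carrier U1_orth[OF muc mun]])
      ultimately show ?thesis using iso_mult by simp
    qed
    have phtc: "phitilde \<phi>0 \<mu> \<in> carrier_vec n" unfolding phitilde_def using phic muc by simp
    have psic: "\<psi> \<in> carrier_vec n" unfolding \<psi>_def using phtc by simp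
    have wnn: "0 \<le> w \<theta>" for \<theta> unfolding w_def spec_weight_def by (rule sqnorm_nonneg)
    have qnn: "0 \<le> q \<theta>" and qle: "q \<theta> \<le> 1" for \<theta> unfolding q_def by (simp_all add: pmf_le_1)
    have mge: "ln (1/\<epsilon>) \<le> real m" unfolding m_def using real_nat_ceiling_ge[of "ln (1/\<epsilon>)"] by simp
    have count: "real (detect_calls cnt m D) \<le> 2 * K * (1 + ln (1 / \<epsilon>)) * T"
    proof -
      have cntb: "real (cnt D) \<le> K / D" using pe Dpos unfolding is_phase_estimator_def by blast
      then have "0 \<le> K / D" using of_nat_0_le_iff order_trans by blast
      then have K0: "0 \<le> K" using Dpos by (simp add: zero_le_divide_iff)
      have KD: "K / D = K * T" unfolding D_def by simp
      have mb: "real m \<le> 1 + ln (1/\<epsilon>)" unfolding m_def by (rule m_upper[OF e0 e1])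
      have l0: "0 \<le> ln (1/\<epsilon>)" using e0 e1 by simp
      have "real (detect_calls cnt m D) = real m * real (cnt D)" unfolding detect_calls_def by simp
      also have "\<dots> \<le> (1 + ln (1/\<epsilon>)) * (K * T)"
        by (rule mult_mono[OF mb]) (use cntb KD l0 in auto)
      also have "\<dots> \<le> 2 * K * (1 + ln (1 / \<epsilon>)) * T"
      proof -
        have "0 \<le> (1 + ln (1/\<epsilon>)) * (K * T)" using K0 T1 l0 by simp
        then show ?thesis by (simp add: algebra_simps)
      qed
      finally show ?thesis .
    qed
    have zero_case: "p = 0" if z: "scalar_prod \<mu> \<phi>0 = 0"
    proof -
      have pe1: "\<psi> \<in> eigspace n A 1" unfolding \<psi>_def A_def by (rule phi_eig[OF U2c phic phif muc z])
      have "(\<Sum>\<theta>\<in>E. w \<theta> * (1 - q \<theta> ^ m)) = 0"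
      proof (rule sum.neutral, intro ballI)
        fix \<theta> assume th: "\<theta> \<in> E"
        then have b: "- pi < \<theta>" "\<theta> \<le> pi" unfolding E_def eigphases_def by auto
        show "w \<theta> * (1 - q \<theta> ^ m) = 0"
        proof (cases "\<theta> = 0")
          case True
          have "est D 0 = return_pmf 0" using pe Dpos unfolding is_phase_estimator_def by blast
          then have "q \<theta> = 1" unfolding q_def True by simp
          then show ?thesis by simp
        next
          case False
          have "cis \<theta> \<noteq> 1"
          proof
            assume "cis \<theta> = 1"
            then have "sgn (1::complex) = cis \<theta>" by simp
            then have "Arg 1 = \<theta>" using cis_Arg_unique b by blast
            then show False using False by simp
          qed
          then have "orth_proj (eigspace n A (cis \<theta>)) \<psi> = 0\<^sub>v n" by (rule orth_proj_other[OF iso pe1])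
          then have "w \<theta> = 0" unfolding w_def spec_weight_def by simp
          then show ?thesis by simp
        qed
      qed
      then show ?thesis unfolding p_eq .
    qed
    have nz_case: "\<bar>p - rsqnorm (phitilde \<phi>0 \<mu>)\<bar> \<le> 2 * \<epsilon>" if nz: "scalar_prod \<mu> \<phi>0 \<noteq> 0"
    proof -
      have no0: "0 \<notin> E"
      proof
        assume "0 \<in> E"
        then have ne: "eigspace n A (cis 0) \<noteq> {0\<^sub>v n}" unfolding E_def eigphases_def by auto
        have "eigspace n A 1 \<subseteq> {0\<^sub>v n}"
          using eig1_trivial[OF U2c U2o phic phif uniq muc nz] unfolding A_def by blast
        moreover have "0\<^sub>v n \<in> eigspace n A 1" unfolding eigspace_def using Acar by auto
        ultimately show False using ne by auto
      qed
      obtain P Q :: "complex mat" and d where P: "P \<in> carrier_mat n n" and Q: "Q \<in> carrier_mat n n"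
        and PQ: "P * Q = 1\<^sub>m n" and QP: "Q * P = 1\<^sub>m n"
        and eig: "\<And>j. j < n \<Longrightarrow> A *\<^sub>v col P j = d j \<cdot>\<^sub>v col P j"
        and nzP: "\<And>j. j < n \<Longrightarrow> col P j \<noteq> 0\<^sub>v n"
        using unitary_diag[OF iso] by metis
      have finE: "finite E" unfolding E_def by (rule eigphases_finite[OF iso P Q PQ eig nzP])
      define S where "S = rsqnorm (phitilde \<phi>0 \<mu>)"
      have sumw: "(\<Sum>\<theta>\<in>E. w \<theta>) = S"
        unfolding E_def w_def S_def using spec_sum[OF iso P Q PQ eig nzP psic] sqnorm_cvec \<psi>_def by simp
      have S1: "S \<le> 1" unfolding S_def rsqnorm_phitilde[OF muc phic mun phin] by simp
      define B where "B = {\<theta> \<in> E. \<theta> \<noteq> 0 \<and> 1 / \<bar>\<theta>\<bar> > T}"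
      have BE: "B \<subseteq> E" unfolding B_def by auto
      have tail: "(\<Sum>\<theta>\<in>B. w \<theta>) \<le> \<epsilon>"
      proof -
        have "T \<ge> Inf {y. 0 \<le> y \<and> (\<Sum>\<theta>\<in>{\<theta> \<in> E. \<theta> \<noteq> 0 \<and> 1 / \<bar>\<theta>\<bar> > y}. w \<theta>) \<le> \<epsilon>}"
          using Tq unfolding QHT_def QH_tail_def E_def w_def A_def \<psi>_def by simp
        from tail_bound[OF finE _ _ this] wnn e0 show ?thesis unfolding B_def by simp
      qed
      have diff: "S - p = (\<Sum>\<theta>\<in>E. w \<theta> * q \<theta> ^ m)"
        unfolding p_eq sumw[symmetric] by (simp add: sum_subtractf[symmetric] algebra_simps)
      have split: "(\<Sum>\<theta>\<in>E. w \<theta> * q \<theta> ^ m) = (\<Sum>\<theta>\<in>E - B. w \<theta> * q \<theta> ^ m) + (\<Sum>\<theta>\<in>B. w \<theta> * q \<theta> ^ m)"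
        by (rule sum.subset_diff[OF BE finE])
      have part1: "(\<Sum>\<theta>\<in>B. w \<theta> * q \<theta> ^ m) \<le> \<epsilon>"
      proof -
        have "(\<Sum>\<theta>\<in>B. w \<theta> * q \<theta> ^ m) \<le> (\<Sum>\<theta>\<in>B. w \<theta>)"
        proof (rule sum_mono)
          fix \<theta> have "q \<theta> ^ m \<le> 1" using qnn qle by (simp add: power_le_one)
          then show "w \<theta> * q \<theta> ^ m \<le> w \<theta>" using wnn[of \<theta>] by (simp add: mult_left_le)
        qed
        then show ?thesis using tail by simp
      qed
      have part2: "(\<Sum>\<theta>\<in>E - B. w \<theta> * q \<theta> ^ m) \<le> \<epsilon> * S"
      proof -
        have "(\<Sum>\<theta>\<in>E - B. w \<theta> * q \<theta> ^ m) \<le> (\<Sum>\<theta>\<in>E - B. w \<theta> * \<epsilon>)"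
        proof (rule sum_mono)
          fix \<theta> assume th: "\<theta> \<in> E - B"
          then have thE: "\<theta> \<in> E" and nB: "\<not> (1 / \<bar>\<theta>\<bar> > T)" unfolding B_def using no0 by auto
          have t0: "\<theta> \<noteq> 0" using thE no0 by auto
          have b: "- pi < \<theta>" "\<theta> \<le> pi" using thE unfolding E_def eigphases_def by auto
          have "1 / \<bar>\<theta>\<bar> \<le> T" using nB by simp
          then have "1 \<le> T * \<bar>\<theta>\<bar>" using t0 by (simp add: divide_le_eq)
          then have "D \<le> \<bar>\<theta>\<bar>" unfolding D_def using T1 by (simp add: divide_le_eq mult.commute)
          then have "q \<theta> \<le> 1/3" unfolding q_def by (rule q_bound[OF pe Dpos b])
          then have "q \<theta> ^ m \<le> \<epsilon>" by (rule pow_bound[OF qnn _ e0 e1 mge])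
          then show "w \<theta> * q \<theta> ^ m \<le> w \<theta> * \<epsilon>" using wnn[of \<theta>] by (simp add: mult_left_mono)
        qed
        also have "\<dots> = \<epsilon> * (\<Sum>\<theta>\<in>E - B. w \<theta>)" by (simp add: sum_distrib_left mult.commute)
        also have "(\<Sum>\<theta>\<in>E - B. w \<theta>) \<le> (\<Sum>\<theta>\<in>E. w \<theta>)"
          by (rule sum_mono2[OF finE]) (use wnn in auto)
        then have "\<epsilon> * (\<Sum>\<theta>\<in>E - B. w \<theta>) \<le> \<epsilon> * S" using e0 sumw by (simp add: mult_left_mono)
        finally show ?thesis .
      qed
      have lo: "0 \<le> S - p" unfolding diff by (rule sum_nonneg) (use wnn qnn in simp)
      have hi: "S - p \<le> 2 * \<epsilon>"
      proof -
        have "S - p \<le> \<epsilon> * S + \<epsilon>" using diff split part1 part2 by linarith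
        moreover have "\<epsilon> * S \<le> \<epsilon>" using S1 e0 by (simp add: mult_left_le)
        ultimately show ?thesis by linarith
      qed
      show ?thesis using lo hi unfolding S_def by linarith
    qed
    show ?thesis
      unfolding Let_def m_def[symmetric] A_def[symmetric] \<psi>_def[symmetric] D_def[symmetric] p_def[symmetric]
      using count zero_case nz_case by blast
  qed
  done

end
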